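(* Let $p\ge1$. Let $U$, $V$ be discrete random variables taking values in a common finite set $\mathcal{U}$, and $W$ a discrete random variable taking values in a finite set $\mathcal{W}$, all on a common probability space, such that $\|u-u'\|_p=\sqrt[p]{2}$ for distinct $u,u'\in\mathcal{U}$ and $\|w-w'\|_p=\sqrt[p]{2}$ for distinct $w,w'\in\mathcal{W}$ (and $0$ for equal points). Equip pairs with the ground metric $\|(u,w)-(u',w')\|_p=\left(\|u-u'\|_p^p+\|w-w'\|_p^p\right)^{1/p}$. Then, with $W_1$ the 1-Wasserstein distance, $$W_1(p(U,W),p(U)p(W))=\sum_{w}W_1(p(U\mid W=w),p(U))\,\mathbb{P}(W=w),$$ $$W_1(p(U,W),p(V,W))=\sum_{w}W_1(p(U\mid W=w),p(V\mid W=w))\,\mathbb{P}(W=w),$$ $$W_1(p(U)p(W),p(V)p(W))=\sum_{w}W_1(p(U),p(V))\,\mathbb{P}(W=w).$$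
   Context: $p(U,W)$ denotes the joint law, $p(U)p(W)$ the product of marginal laws, and $p(U\mid W=w)$ the conditional law. *)

theory Defs
  imports "HOL-Probability.Probability"
begin

definition lpdist :: "real \<Rightarrow> real ^ 'n \<Rightarrow> real ^ 'n \<Rightarrow> real" where
  "lpdist p x y = (\<Sum>i\<in>UNIV. \<bar>x $ i - y $ i\<bar> powr p) powr (1 / p)"

definition pair_lpdist :: "real \<Rightarrow> ((real ^ 'n) \<times> (real ^ 'm)) \<Rightarrow> ((real ^ 'n) \<times> (real ^ 'm)) \<Rightarrow> real" where
  "pair_lpdist p a b = (lpdist p (fst a) (fst b) powr p + lpdist p (snd a) (snd b) powr p) powr (1 / p)"

definition couplings :: "'a pmf \<Rightarrow> 'b pmf \<Rightarrow> ('a \<times> 'b) pmf set" where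
  "couplings \<mu> \<nu> = {\<pi>. map_pmf fst \<pi> = \<mu> \<and> map_pmf snd \<pi> = \<nu>}"

definition wasserstein1 :: "('a \<Rightarrow> 'a \<Rightarrow> real) \<Rightarrow> 'a pmf \<Rightarrow> 'a pmf \<Rightarrow> real" where
  "wasserstein1 d \<mu> \<nu> = (INF \<pi>\<in>couplings \<mu> \<nu>. measure_pmf.expectation \<pi> (\<lambda>(x, y). d x y))"

end

theory Submission
  imports Defs
begin

lemma pmf_map_finite:
  assumes "finite T" "set_pmf M \<subseteq> T"
  shows "pmf (map_pmf g M) x = (\<Sum>z\<in>{z\<in>T. g z = x}. pmf M z)"
proof -
  have "pmf (map_pmf g M) x = measure M (g -` {x})" by (rule pmf_map)
  also have "\<dots> = measure M (g -` {x} \<inter> set_pmf M)" by (rule measure_Int_set_pmf[symmetric])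
  also have "g -` {x} \<inter> set_pmf M = {z\<in>T. g z = x} \<inter> set_pmf M" using assms by auto
  also have "measure M \<dots> = measure M {z\<in>T. g z = x}" by (rule measure_Int_set_pmf)
  also have "\<dots> = (\<Sum>z\<in>{z\<in>T. g z = x}. pmf M z)"
    using assms by (intro measure_measure_pmf_finite) auto
  finally show ?thesis .
qed

lemma sum_pmf_finite:
  assumes "finite T" "set_pmf M \<subseteq> T"
  shows "(\<Sum>z\<in>T. pmf M z) = 1"
  using assms by (rule sum_pmf_eq_1)

definition ov :: "'c set \<Rightarrow> ('c \<Rightarrow> real) \<Rightarrow> ('c \<Rightarrow> real) \<Rightarrow> real" where
  "ov S f g = (\<Sum>x\<in>S. f x - min (f x) (g x))"


lemma coupling_exists:
  fixes \<mu> \<nu> :: "'c pmf" and k :: "'c \<Rightarrow> 'k"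
  assumes fin: "finite S" and s\<mu>: "set_pmf \<mu> \<subseteq> S" and s\<nu>: "set_pmf \<nu> \<subseteq> S"
    and marg: "map_pmf k \<mu> = map_pmf k \<nu>"
  obtains \<pi> where "\<pi> \<in> couplings \<mu> \<nu>" "set_pmf \<pi> \<subseteq> S \<times> S"
    "\<forall>z\<in>set_pmf \<pi>. k (fst z) = k (snd z)"
    "(\<Sum>z\<in>S\<times>S. pmf \<pi> z * (if fst z = snd z then 0 else 1)) = ov S (pmf \<mu>) (pmf \<nu>)"
proof -
  define m where "m x = min (pmf \<mu> x) (pmf \<nu> x)" for x
  define a where "a x = pmf \<mu> x - m x" for x
  define b where "b x = pmf \<nu> x - m x" for x
  define t where "t w = (\<Sum>x\<in>{x\<in>S. k x = w}. a x)" for w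
  have m0: "m x \<ge> 0" for x by (simp add: m_def)
  have a0: "a x \<ge> 0" for x by (simp add: a_def m_def)
  have b0: "b x \<ge> 0" for x by (simp add: b_def m_def)
  have t0: "t w \<ge> 0" for w unfolding t_def by (intro sum_nonneg a0)
  have ab: "a x * b x = 0" for x by (simp add: a_def b_def m_def min_def)
  have finw: "finite {x\<in>S. k x = w}" for w using fin by simp
  have tb: "(\<Sum>x\<in>{x\<in>S. k x = w}. b x) = t w" for w
  proof -
    have "(\<Sum>x\<in>{x\<in>S. k x = w}. pmf \<mu> x) = (\<Sum>x\<in>{x\<in>S. k x = w}. pmf \<nu> x)"
      using pmf_map_finite[OF fin s\<mu>, of k w] pmf_map_finite[OF fin s\<nu>, of k w] marg by simp
    then show ?thesis unfolding t_def a_def b_def by (simp add: sum_subtractf)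
  qed
  have at: "a x = 0" if "t (k x) = 0" "x \<in> S" for x
  proof -
    have "\<forall>y\<in>{y\<in>S. k y = k x}. a y = 0"
      using that(1) unfolding t_def by (subst sum_nonneg_eq_0_iff[symmetric]) (auto simp: finw a0)
    then show ?thesis using that by auto
  qed
  have bt: "b x = 0" if "t (k x) = 0" "x \<in> S" for x
  proof -
    have "\<forall>y\<in>{y\<in>S. k y = k x}. b y = 0"
      using that(1) tb[of "k x"] by (subst sum_nonneg_eq_0_iff[symmetric]) (auto simp: finw b0)
    then show ?thesis using that by auto
  qed
  define f where "f z = (if fst z \<in> S \<and> snd z \<in> S then
      (if fst z = snd z then m (fst z) else 0) +
      (if k (fst z) = k (snd z) then a (fst z) * b (snd z) / t (k (fst z)) else 0) else 0)" for z
  have f0: "f z \<ge> 0" for z unfolding f_def using m0 a0 b0 t0 by (auto intro!: add_nonneg_nonneg divide_nonneg_nonneg mult_nonneg_nonneg)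
  have fdiag: "f (x, x) = m x" if "x \<in> S" for x using that ab by (simp add: f_def)
  have row: "(\<Sum>y\<in>S. f (x, y)) = pmf \<mu> x" if x: "x \<in> S" for x
  proof -
    have "(\<Sum>y\<in>S. f (x, y)) = (\<Sum>y\<in>S. (if x = y then m x else 0)) +
        (\<Sum>y\<in>S. (if k x = k y then a x * b y / t (k x) else 0))"
      using x by (intro trans[OF sum.cong sum.distrib]) (auto simp: f_def)
    also have "(\<Sum>y\<in>S. (if x = y then m x else 0)) = m x" using x fin by simp
    also have "(\<Sum>y\<in>S. (if k x = k y then a x * b y / t (k x) else 0)) =
        (\<Sum>y\<in>{y\<in>S. k y = k x}. a x * b y / t (k x))"
      using fin by (simp add: sum.inter_filter[symmetric] eq_commute)
    also have "\<dots> = a x * (\<Sum>y\<in>{y\<in>S. k y = k x}. b y) / t (k x)"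
      by (simp add: sum_distrib_left sum_divide_distrib)
    also have "\<dots> = a x" using tb[of "k x"] at[OF _ x] by (cases "t (k x) = 0") auto
    finally show ?thesis by (simp add: a_def)
  qed
  have col: "(\<Sum>x\<in>S. f (x, y)) = pmf \<nu> y" if y: "y \<in> S" for y
  proof -
    have "(\<Sum>x\<in>S. f (x, y)) = (\<Sum>x\<in>S. (if x = y then m y else 0)) +
        (\<Sum>x\<in>S. (if k x = k y then a x * b y / t (k y) else 0))"
      using y by (intro trans[OF sum.cong sum.distrib]) (auto simp: f_def)
    also have "(\<Sum>x\<in>S. (if x = y then m y else 0)) = m y" using y fin by simp
    also have "(\<Sum>x\<in>S. (if k x = k y then a x * b y / t (k y) else 0)) =
        (\<Sum>x\<in>{x\<in>S. k x = k y}. a x * b y / t (k y))"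
      using fin by (simp add: sum.inter_filter[symmetric])
    also have "\<dots> = (\<Sum>x\<in>{x\<in>S. k x = k y}. a x) * b y / t (k y)"
      by (simp add: sum_distrib_right sum_divide_distrib)
    also have "\<dots> = b y" using bt[OF _ y] by (cases "t (k y) = 0") (auto simp: t_def)
    finally show ?thesis by (simp add: b_def)
  qed
  have tot: "(\<Sum>z\<in>S\<times>S. f z) = 1"
  proof -
    have "(\<Sum>z\<in>S\<times>S. f z) = (\<Sum>x\<in>S. \<Sum>y\<in>S. f (x, y))"
      by (simp add: sum.cartesian_product)
    also have "\<dots> = (\<Sum>x\<in>S. pmf \<mu> x)" using row by simp
    also have "\<dots> = 1" using fin s\<mu> by (rule sum_pmf_eq_1)
    finally show ?thesis .
  qed
  have fout: "f z = 0" if "z \<notin> S \<times> S" for z using that by (auto simp: f_def mem_Times_iff)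
  have prob: "(\<integral>\<^sup>+z. ennreal (f z) \<partial>count_space UNIV) = 1"
  proof -
    have "(\<integral>\<^sup>+z. ennreal (f z) \<partial>count_space UNIV) = (\<Sum>z\<in>S\<times>S. ennreal (f z))"
      using fin fout by (intro nn_integral_count_space') auto
    also have "\<dots> = ennreal (\<Sum>z\<in>S\<times>S. f z)" using f0 by (simp add: sum_ennreal)
    finally show ?thesis using tot by simp
  qed
  define \<pi> where "\<pi> = embed_pmf f"
  have pmf\<pi>: "pmf \<pi> z = f z" for z unfolding \<pi>_def using f0 prob by (rule pmf_embed_pmf)
  have set\<pi>: "set_pmf \<pi> \<subseteq> S \<times> S" using pmf\<pi> fout by (auto simp: set_pmf_eq)
  have finSS: "finite (S \<times> S)" using fin by simp
  have m1: "map_pmf fst \<pi> = \<mu>"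
  proof (rule pmf_eqI)
    fix x
    show "pmf (map_pmf fst \<pi>) x = pmf \<mu> x"
    proof (cases "x \<in> S")
      case True
      have "{z\<in>S\<times>S. fst z = x} = Pair x ` S" using True by auto
      then have "pmf (map_pmf fst \<pi>) x = (\<Sum>z\<in>Pair x ` S. f z)"
        using pmf_map_finite[OF finSS set\<pi>, of fst x] by (simp add: pmf\<pi>)
      also have "\<dots> = (\<Sum>y\<in>S. f (x, y))" by (subst sum.reindex) (auto simp: inj_on_def)
      finally show ?thesis using row[OF True] by simp
    next
      case False
      then have "{z\<in>S\<times>S. fst z = x} = {}" by auto
      then have "pmf (map_pmf fst \<pi>) x = 0"
        using pmf_map_finite[OF finSS set\<pi>, of fst x] by (simp only: sum.empty)
      moreover have "pmf \<mu> x = 0" using False s\<mu> by (auto simp: set_pmf_eq)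
      ultimately show ?thesis by simp
    qed
  qed
  have m2: "map_pmf snd \<pi> = \<nu>"
  proof (rule pmf_eqI)
    fix y
    show "pmf (map_pmf snd \<pi>) y = pmf \<nu> y"
    proof (cases "y \<in> S")
      case True
      have "{z\<in>S\<times>S. snd z = y} = (\<lambda>x. (x, y)) ` S" using True by auto
      then have "pmf (map_pmf snd \<pi>) y = (\<Sum>z\<in>(\<lambda>x. (x, y)) ` S. f z)"
        using pmf_map_finite[OF finSS set\<pi>, of snd y] by (simp add: pmf\<pi>)
      also have "\<dots> = (\<Sum>x\<in>S. f (x, y))" by (subst sum.reindex) (auto simp: inj_on_def)
      finally show ?thesis using col[OF True] by simp
    next
      case False
      then have "{z\<in>S\<times>S. snd z = y} = {}" by auto
      then have "pmf (map_pmf snd \<pi>) y = 0"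
        using pmf_map_finite[OF finSS set\<pi>, of snd y] by (simp only: sum.empty)
      moreover have "pmf \<nu> y = 0" using False s\<nu> by (auto simp: set_pmf_eq)
      ultimately show ?thesis by simp
    qed
  qed
  have keq: "\<forall>z\<in>set_pmf \<pi>. k (fst z) = k (snd z)"
  proof
    fix z assume "z \<in> set_pmf \<pi>"
    then have "f z \<noteq> 0" using pmf\<pi> by (simp add: set_pmf_eq)
    then show "k (fst z) = k (snd z)" by (auto simp: f_def split: if_splits)
  qed
  have cost: "(\<Sum>z\<in>S\<times>S. pmf \<pi> z * (if fst z = snd z then 0 else 1)) = ov S (pmf \<mu>) (pmf \<nu>)"
  proof -
    have "(\<Sum>z\<in>S\<times>S. pmf \<pi> z * (if fst z = snd z then 0 else 1)) =
        (\<Sum>x\<in>S. \<Sum>y\<in>S. f (x, y) - (if y = x then f (x, x) else 0))"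
      by (simp add: sum.cartesian_product pmf\<pi>) (intro sum.cong refl, auto)
    also have "\<dots> = (\<Sum>x\<in>S. pmf \<mu> x - m x)"
      using fin by (intro sum.cong refl) (simp add: sum_subtractf row fdiag)
    finally show ?thesis by (simp add: ov_def m_def)
  qed
  show ?thesis using that[of \<pi>] m1 m2 set\<pi> keq cost by (simp add: couplings_def)
qed

lemma coupling_set:
  assumes "\<sigma> \<in> couplings \<mu> \<nu>" "set_pmf \<mu> \<subseteq> S" "set_pmf \<nu> \<subseteq> S"
  shows "set_pmf \<sigma> \<subseteq> S \<times> S"
proof
  fix z assume z: "z \<in> set_pmf \<sigma>"
  from assms(1) have e: "\<mu> = map_pmf fst \<sigma>" "\<nu> = map_pmf snd \<sigma>" by (auto simp: couplings_def)
  have "fst z \<in> set_pmf \<mu>" "snd z \<in> set_pmf \<nu>" using z unfolding e by auto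
  then show "z \<in> S \<times> S" unfolding mem_Times_iff using assms(2,3) by blast
qed

lemma expect_finite:
  assumes "finite S" "set_pmf \<sigma> \<subseteq> S \<times> S"
  shows "measure_pmf.expectation \<sigma> (\<lambda>(x, y). d x y) = (\<Sum>z\<in>S\<times>S. pmf \<sigma> z * d (fst z) (snd z))"
  using assms by (subst integral_measure_pmf[where A="S \<times> S"]) (auto simp: split_beta)

lemma coupling_lower:
  assumes fin: "finite S" and s\<mu>: "set_pmf \<mu> \<subseteq> S" and s\<nu>: "set_pmf \<nu> \<subseteq> S"
    and \<sigma>: "\<sigma> \<in> couplings \<mu> \<nu>"
  shows "(\<Sum>z\<in>S\<times>S. pmf \<sigma> z * (if fst z = snd z then 0 else 1)) \<ge> ov S (pmf \<mu>) (pmf \<nu>)"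
proof -
  have ss: "set_pmf \<sigma> \<subseteq> S \<times> S" using coupling_set[OF \<sigma> s\<mu> s\<nu>] .
  have finSS: "finite (S \<times> S)" using fin by simp
  have le\<mu>: "pmf \<sigma> (x, x) \<le> pmf \<mu> x" if x: "x \<in> S" for x
  proof -
    have "pmf \<mu> x = (\<Sum>z\<in>{z\<in>S\<times>S. fst z = x}. pmf \<sigma> z)"
      using pmf_map_finite[OF finSS ss, of fst x] \<sigma> by (simp add: couplings_def)
    moreover have "pmf \<sigma> (x, x) \<le> (\<Sum>z\<in>{z\<in>S\<times>S. fst z = x}. pmf \<sigma> z)"
      using x finSS by (intro member_le_sum) auto
    ultimately show ?thesis by simp
  qed
  have le\<nu>: "pmf \<sigma> (x, x) \<le> pmf \<nu> x" if x: "x \<in> S" for x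
  proof -
    have "pmf \<nu> x = (\<Sum>z\<in>{z\<in>S\<times>S. snd z = x}. pmf \<sigma> z)"
      using pmf_map_finite[OF finSS ss, of snd x] \<sigma> by (simp add: couplings_def)
    moreover have "pmf \<sigma> (x, x) \<le> (\<Sum>z\<in>{z\<in>S\<times>S. snd z = x}. pmf \<sigma> z)"
      using x finSS by (intro member_le_sum) auto
    ultimately show ?thesis by simp
  qed
  have "(\<Sum>z\<in>S\<times>S. pmf \<sigma> z * (if fst z = snd z then 0 else 1)) =
      (\<Sum>x\<in>S. \<Sum>y\<in>S. pmf \<sigma> (x, y) - (if y = x then pmf \<sigma> (x, x) else 0))"
    by (simp add: sum.cartesian_product) (intro sum.cong refl, auto)
  also have "\<dots> = (\<Sum>z\<in>S\<times>S. pmf \<sigma> z) - (\<Sum>x\<in>S. pmf \<sigma> (x, x))"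
    using fin by (simp add: sum_subtractf sum.cartesian_product)
  also have "(\<Sum>z\<in>S\<times>S. pmf \<sigma> z) = (\<Sum>x\<in>S. pmf \<mu> x)"
    using sum_pmf_eq_1[OF finSS ss] sum_pmf_eq_1[OF fin s\<mu>] by simp
  finally have eq: "(\<Sum>z\<in>S\<times>S. pmf \<sigma> z * (if fst z = snd z then 0 else 1)) =
      (\<Sum>x\<in>S. pmf \<mu> x) - (\<Sum>x\<in>S. pmf \<sigma> (x, x))" .
  have "(\<Sum>x\<in>S. pmf \<sigma> (x, x)) \<le> (\<Sum>x\<in>S. min (pmf \<mu> x) (pmf \<nu> x))"
    using le\<mu> le\<nu> by (intro sum_mono) auto
  then show ?thesis unfolding eq ov_def by (simp add: sum_subtractf)
qed

lemma W1_disc: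
  fixes d :: "'c \<Rightarrow> 'c \<Rightarrow> real" and k :: "'c \<Rightarrow> 'k"
  assumes fin: "finite S" and s\<mu>: "set_pmf \<mu> \<subseteq> S" and s\<nu>: "set_pmf \<nu> \<subseteq> S"
    and marg: "map_pmf k \<mu> = map_pmf k \<nu>" and c: "c \<ge> 0"
    and d0: "\<forall>x\<in>S. d x x = 0"
    and dge: "\<forall>x\<in>S. \<forall>y\<in>S. x \<noteq> y \<longrightarrow> d x y \<ge> c"
    and deq: "\<forall>x\<in>S. \<forall>y\<in>S. x \<noteq> y \<longrightarrow> k x = k y \<longrightarrow> d x y = c"
  shows "wasserstein1 d \<mu> \<nu> = c * ov S (pmf \<mu>) (pmf \<nu>)"
proof -
  obtain \<pi> where \<pi>: "\<pi> \<in> couplings \<mu> \<nu>" "set_pmf \<pi> \<subseteq> S \<times> S"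
    "\<forall>z\<in>set_pmf \<pi>. k (fst z) = k (snd z)"
    "(\<Sum>z\<in>S\<times>S. pmf \<pi> z * (if fst z = snd z then 0 else 1)) = ov S (pmf \<mu>) (pmf \<nu>)"
    using coupling_exists[OF fin s\<mu> s\<nu> marg] by blast
  have val: "measure_pmf.expectation \<pi> (\<lambda>(x, y). d x y) = c * ov S (pmf \<mu>) (pmf \<nu>)"
  proof -
    have "measure_pmf.expectation \<pi> (\<lambda>(x, y). d x y) = (\<Sum>z\<in>S\<times>S. pmf \<pi> z * d (fst z) (snd z))"
      using fin \<pi>(2) by (rule expect_finite)
    also have "\<dots> = (\<Sum>z\<in>S\<times>S. c * (pmf \<pi> z * (if fst z = snd z then 0 else 1)))"
    proof (intro sum.cong refl)
      fix z assume z: "z \<in> S \<times> S"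
      show "pmf \<pi> z * d (fst z) (snd z) = c * (pmf \<pi> z * (if fst z = snd z then 0 else 1))"
      proof (cases "pmf \<pi> z = 0")
        case False
        then have "k (fst z) = k (snd z)" using \<pi>(3) by (auto simp: set_pmf_eq)
        then show ?thesis using z d0 deq by (auto simp: mem_Times_iff)
      qed simp
    qed
    also have "\<dots> = c * ov S (pmf \<mu>) (pmf \<nu>)" using \<pi>(4) by (simp add: sum_distrib_left[symmetric])
    finally show ?thesis .
  qed
  have lower: "c * ov S (pmf \<mu>) (pmf \<nu>) \<le> measure_pmf.expectation \<sigma> (\<lambda>(x, y). d x y)"
    if \<sigma>: "\<sigma> \<in> couplings \<mu> \<nu>" for \<sigma>
  proof -
    have ss: "set_pmf \<sigma> \<subseteq> S \<times> S" using coupling_set[OF \<sigma> s\<mu> s\<nu>] .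
    have "c * ov S (pmf \<mu>) (pmf \<nu>) \<le> c * (\<Sum>z\<in>S\<times>S. pmf \<sigma> z * (if fst z = snd z then 0 else 1))"
      using coupling_lower[OF fin s\<mu> s\<nu> \<sigma>] c by (rule mult_left_mono)
    also have "\<dots> = (\<Sum>z\<in>S\<times>S. pmf \<sigma> z * (c * (if fst z = snd z then 0 else 1)))"
      by (simp add: sum_distrib_left mult_ac)
    also have "\<dots> \<le> (\<Sum>z\<in>S\<times>S. pmf \<sigma> z * d (fst z) (snd z))"
      using dge d0 c by (intro sum_mono mult_left_mono) (auto simp: mem_Times_iff)
    also have "\<dots> = measure_pmf.expectation \<sigma> (\<lambda>(x, y). d x y)"
      using fin ss by (rule expect_finite[symmetric])
    finally show ?thesis .
  qed
  show ?thesis unfolding wasserstein1_def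
  proof (rule cInf_eq_minimum)
    show "c * ov S (pmf \<mu>) (pmf \<nu>) \<in> (\<lambda>\<pi>. measure_pmf.expectation \<pi> (\<lambda>(x, y). d x y)) ` couplings \<mu> \<nu>"
      using \<pi>(1) val by (intro image_eqI[where x=\<pi>]) auto
  next
    fix x assume "x \<in> (\<lambda>\<pi>. measure_pmf.expectation \<pi> (\<lambda>(x, y). d x y)) ` couplings \<mu> \<nu>"
    then show "c * ov S (pmf \<mu>) (pmf \<nu>) \<le> x" using lower by auto
  qed
qed

lemma pmf_map_cond:
  assumes pos: "measure_pmf.prob P A > 0"
  shows "pmf (map_pmf U (cond_pmf P A)) u * measure_pmf.prob P A = measure_pmf.prob P (A \<inter> U -` {u})"
proof -
  have ne: "set_pmf P \<inter> A \<noteq> {}"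
  proof
    assume "set_pmf P \<inter> A = {}"
    then have "measure_pmf.prob P A = 0" using measure_Int_set_pmf[of P A] by (simp add: Int_commute)
    then show False using pos by simp
  qed
  have "pmf (map_pmf U (cond_pmf P A)) u = measure (measure_pmf (cond_pmf P A)) (U -` {u})"
    by (rule pmf_map)
  also have "\<dots> = measure (uniform_measure (measure_pmf P) A) (U -` {u})"
    by (simp add: cond_pmf.rep_eq[OF ne])
  also have "\<dots> = measure_pmf.prob P (A \<inter> U -` {u}) / measure_pmf.prob P A"
    using pos by (intro measure_uniform_measure) (auto simp: measure_pmf.emeasure_eq_measure)
  finally show ?thesis using pos by simp
qed

lemma ov_prod:
  assumes "\<forall>u\<in>A. \<forall>w\<in>B. f (u, w) = q w * \<alpha> w u \<and> g (u, w) = q w * \<beta> w u"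
    and "\<forall>w\<in>B. q w \<ge> 0"
  shows "ov (A \<times> B) f g = (\<Sum>w\<in>B. q w * ov A (\<alpha> w) (\<beta> w))"
proof -
  have "ov (A \<times> B) f g = (\<Sum>u\<in>A. \<Sum>w\<in>B. f (u, w) - min (f (u, w)) (g (u, w)))"
    unfolding ov_def sum.cartesian_product by (simp add: split_beta)
  also have "\<dots> = (\<Sum>u\<in>A. \<Sum>w\<in>B. q w * (\<alpha> w u - min (\<alpha> w u) (\<beta> w u)))"
    using assms by (intro sum.cong refl) (simp add: right_diff_distrib min_mult_distrib_left)
  also have "\<dots> = (\<Sum>w\<in>B. \<Sum>u\<in>A. q w * (\<alpha> w u - min (\<alpha> w u) (\<beta> w u)))"
    by (rule sum.swap)
  also have "\<dots> = (\<Sum>w\<in>B. q w * ov A (\<alpha> w) (\<beta> w))"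
    by (simp add: ov_def sum_distrib_left)
  finally show ?thesis .
qed

lemma lpdist_self: "lpdist p x x = 0"
  by (simp add: lpdist_def)

lemma c_powr:
  assumes "p \<ge> 1" shows "(2 powr (1 / p)) powr p = (2::real)"
  using assms by (simp add: powr_powr)

theorem lemma7:
  fixes p :: real
    and P :: "'a pmf"
    and U V :: "'a \<Rightarrow> real ^ 'n"
    and W :: "'a \<Rightarrow> real ^ 'm"
    and \<U> :: "(real ^ 'n) set"
    and \<W> :: "(real ^ 'm) set"
  assumes p: "p \<ge> 1"
    and fin_U: "finite \<U>" and fin_W: "finite \<W>"
    and U_vals: "\<forall>\<omega>. U \<omega> \<in> \<U>" and V_vals: "\<forall>\<omega>. V \<omega> \<in> \<U>"
    and W_vals: "\<forall>\<omega>. W \<omega> \<in> \<W>"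
    and dist_U: "\<forall>u\<in>\<U>. \<forall>u'\<in>\<U>. u \<noteq> u' \<longrightarrow> lpdist p u u' = 2 powr (1 / p)"
    and dist_W: "\<forall>w\<in>\<W>. \<forall>w'\<in>\<W>. w \<noteq> w' \<longrightarrow> lpdist p w w' = 2 powr (1 / p)"
  shows
    "(wasserstein1 (pair_lpdist p) (map_pmf (\<lambda>\<omega>. (U \<omega>, W \<omega>)) P)
        (pair_pmf (map_pmf U P) (map_pmf W P))
     = (\<Sum>w\<in>\<W>. wasserstein1 (lpdist p)
          (map_pmf U (cond_pmf P {\<omega>. W \<omega> = w})) (map_pmf U P)
          * measure_pmf.prob P {\<omega>. W \<omega> = w})) \<and>
    (wasserstein1 (pair_lpdist p) (map_pmf (\<lambda>\<omega>. (U \<omega>, W \<omega>)) P)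
        (map_pmf (\<lambda>\<omega>. (V \<omega>, W \<omega>)) P)
     = (\<Sum>w\<in>\<W>. wasserstein1 (lpdist p)
          (map_pmf U (cond_pmf P {\<omega>. W \<omega> = w}))
          (map_pmf V (cond_pmf P {\<omega>. W \<omega> = w}))
          * measure_pmf.prob P {\<omega>. W \<omega> = w})) \<and>
    (wasserstein1 (pair_lpdist p) (pair_pmf (map_pmf U P) (map_pmf W P))
        (pair_pmf (map_pmf V P) (map_pmf W P))
     = (\<Sum>w\<in>\<W>. wasserstein1 (lpdist p) (map_pmf U P) (map_pmf V P)
          * measure_pmf.prob P {\<omega>. W \<omega> = w}))"
proof -
  define c where "c = 2 powr (1 / p)"
  have c0: "c \<ge> 0" by (simp add: c_def)
  have cp: "c powr p = 2" unfolding c_def using p by (rule c_powr)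
  have p0: "p \<noteq> 0" using p by simp
  have cge: "s powr (1 / p) \<ge> c" if "s \<ge> 2" for s :: real
    unfolding c_def using that p by (intro powr_mono2) auto
  have dU: "lpdist p u u' = (if u = u' then 0 else c)" if "u \<in> \<U>" "u' \<in> \<U>" for u u'
    using that dist_U by (auto simp: lpdist_self c_def)
  have dW: "lpdist p w w' = (if w = w' then 0 else c)" if "w \<in> \<W>" "w' \<in> \<W>" for w w'
    using that dist_W by (auto simp: lpdist_self c_def)
  have dP: "pair_lpdist p x y = ((if fst x = fst y then 0 else 2) + (if snd x = snd y then 0 else 2)) powr (1 / p)"
    if "x \<in> \<U> \<times> \<W>" "y \<in> \<U> \<times> \<W>" for x y
    using that p0 cp by (auto simp: pair_lpdist_def dU dW mem_Times_iff)
  have single: "wasserstein1 (lpdist p) \<mu> \<nu> = c * ov \<U> (pmf \<mu>) (pmf \<nu>)"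
    if "set_pmf \<mu> \<subseteq> \<U>" "set_pmf \<nu> \<subseteq> \<U>" for \<mu> \<nu>
    by (rule W1_disc[where k="\<lambda>_. ()"]) (use that fin_U c0 dU in auto)
  have pairW: "wasserstein1 (pair_lpdist p) \<mu> \<nu> = c * ov (\<U> \<times> \<W>) (pmf \<mu>) (pmf \<nu>)"
    if "set_pmf \<mu> \<subseteq> \<U> \<times> \<W>" "set_pmf \<nu> \<subseteq> \<U> \<times> \<W>" "map_pmf snd \<mu> = map_pmf snd \<nu>" for \<mu> \<nu>
  proof (rule W1_disc[where k=snd])
    show "\<forall>x\<in>\<U> \<times> \<W>. pair_lpdist p x x = 0" using dP p0 by auto
    show "\<forall>x\<in>\<U> \<times> \<W>. \<forall>y\<in>\<U> \<times> \<W>. x \<noteq> y \<longrightarrow> c \<le> pair_lpdist p x y"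
    proof (intro ballI impI)
      fix x y assume xy: "x \<in> \<U> \<times> \<W>" "y \<in> \<U> \<times> \<W>" "x \<noteq> y"
      then have "(2::real) \<le> (if fst x = fst y then 0 else 2) + (if snd x = snd y then 0 else 2)"
        by (cases x; cases y) auto
      then show "c \<le> pair_lpdist p x y" using dP[OF xy(1,2)] cge by simp
    qed
    show "\<forall>x\<in>\<U> \<times> \<W>. \<forall>y\<in>\<U> \<times> \<W>. x \<noteq> y \<longrightarrow> snd x = snd y \<longrightarrow> pair_lpdist p x y = c"
    proof (intro ballI impI)
      fix x y assume xy: "x \<in> \<U> \<times> \<W>" "y \<in> \<U> \<times> \<W>" "x \<noteq> y" "snd x = snd y"
      then have "fst x \<noteq> fst y" by (cases x; cases y) auto
      then show "pair_lpdist p x y = c" using dP[OF xy(1,2)] xy(4) by (simp add: c_def)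
    qed
  qed (use that fin_U fin_W c0 in auto)
  define q where "q w = measure_pmf.prob P {\<omega>. W \<omega> = w}" for w
  have q0: "\<forall>w\<in>\<W>. q w \<ge> 0" by (simp add: q_def)
  have condf: "pmf (map_pmf (\<lambda>\<omega>. (X \<omega>, W \<omega>)) P) (u, w) =
      q w * pmf (map_pmf X (cond_pmf P {\<omega>. W \<omega> = w})) u" for X :: "'a \<Rightarrow> real ^ 'n" and u w
  proof -
    have e: "pmf (map_pmf (\<lambda>\<omega>. (X \<omega>, W \<omega>)) P) (u, w) = measure_pmf.prob P ({\<omega>. W \<omega> = w} \<inter> X -` {u})"
      by (simp add: pmf_map vimage_def Int_def conj_commute)
    show ?thesis
    proof (cases "q w > 0")
      case True
      then show ?thesis using pmf_map_cond[of P "{\<omega>. W \<omega> = w}" X u] e by (simp add: q_def mult_ac)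
    next
      case False
      then have "q w = 0" using measure_nonneg[of "measure_pmf P" "{\<omega>. W \<omega> = w}"] by (simp add: q_def)
      moreover have "measure_pmf.prob P ({\<omega>. W \<omega> = w} \<inter> X -` {u}) \<le> q w"
        unfolding q_def by (rule measure_pmf.finite_measure_mono) auto
      ultimately show ?thesis using e by (simp add: measure_nonneg antisym)
    qed
  qed
  have pW: "pmf (map_pmf W P) w = q w" for w by (simp add: pmf_map q_def vimage_def)
  have sX: "set_pmf (map_pmf X M) \<subseteq> \<U>" if "\<forall>\<omega>. X \<omega> \<in> \<U>" for X :: "'a \<Rightarrow> real ^ 'n" and M
    using that by auto
  have sXW: "set_pmf (map_pmf (\<lambda>\<omega>. (X \<omega>, W \<omega>)) P) \<subseteq> \<U> \<times> \<W>" if "\<forall>\<omega>. X \<omega> \<in> \<U>" for X :: "'a \<Rightarrow> real ^ 'n"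
    using that W_vals by auto
  have sPair: "set_pmf (pair_pmf (map_pmf X P) (map_pmf W P)) \<subseteq> \<U> \<times> \<W>" if "\<forall>\<omega>. X \<omega> \<in> \<U>" for X :: "'a \<Rightarrow> real ^ 'n"
    using that W_vals by auto
  have mXW: "map_pmf snd (map_pmf (\<lambda>\<omega>. (X \<omega>, W \<omega>)) P) = map_pmf W P" for X :: "'a \<Rightarrow> real ^ 'n"
    by (simp add: pmf.map_comp o_def)
  have mP: "map_pmf snd (pair_pmf (map_pmf X P) (map_pmf W P)) = map_pmf W P" for X :: "'a \<Rightarrow> real ^ 'n"
    by (rule map_snd_pair_pmf)
  have pP: "pmf (pair_pmf (map_pmf X P) (map_pmf W P)) (u, w) = q w * pmf (map_pmf X P) u" for X :: "'a \<Rightarrow> real ^ 'n" and u w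
    by (simp add: pmf_pair pW)
  define Uw where "Uw w = map_pmf U (cond_pmf P {\<omega>. W \<omega> = w})" for w
  define Vw where "Vw w = map_pmf V (cond_pmf P {\<omega>. W \<omega> = w})" for w
  have goal1: "wasserstein1 (pair_lpdist p) (map_pmf (\<lambda>\<omega>. (U \<omega>, W \<omega>)) P)
        (pair_pmf (map_pmf U P) (map_pmf W P))
     = (\<Sum>w\<in>\<W>. wasserstein1 (lpdist p) (Uw w) (map_pmf U P) * q w)"
  proof -
    have "wasserstein1 (pair_lpdist p) (map_pmf (\<lambda>\<omega>. (U \<omega>, W \<omega>)) P)
        (pair_pmf (map_pmf U P) (map_pmf W P)) = c * ov (\<U> \<times> \<W>) (pmf (map_pmf (\<lambda>\<omega>. (U \<omega>, W \<omega>)) P))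
        (pmf (pair_pmf (map_pmf U P) (map_pmf W P)))"
      using sXW[OF U_vals] sPair[OF U_vals] mXW mP by (intro pairW) auto
    also have "ov (\<U> \<times> \<W>) (pmf (map_pmf (\<lambda>\<omega>. (U \<omega>, W \<omega>)) P))
        (pmf (pair_pmf (map_pmf U P) (map_pmf W P))) = (\<Sum>w\<in>\<W>. q w * ov \<U> (pmf (Uw w)) (pmf (map_pmf U P)))"
      using q0 by (intro ov_prod) (auto simp: condf pP Uw_def)
    also have "c * (\<Sum>w\<in>\<W>. q w * ov \<U> (pmf (Uw w)) (pmf (map_pmf U P))) =
        (\<Sum>w\<in>\<W>. wasserstein1 (lpdist p) (Uw w) (map_pmf U P) * q w)"
      using sX[OF U_vals] by (simp add: single Uw_def sum_distrib_left mult_ac)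
    finally show ?thesis .
  qed
  have goal2: "wasserstein1 (pair_lpdist p) (map_pmf (\<lambda>\<omega>. (U \<omega>, W \<omega>)) P)
        (map_pmf (\<lambda>\<omega>. (V \<omega>, W \<omega>)) P)
     = (\<Sum>w\<in>\<W>. wasserstein1 (lpdist p) (Uw w) (Vw w) * q w)"
  proof -
    have "wasserstein1 (pair_lpdist p) (map_pmf (\<lambda>\<omega>. (U \<omega>, W \<omega>)) P)
        (map_pmf (\<lambda>\<omega>. (V \<omega>, W \<omega>)) P) = c * ov (\<U> \<times> \<W>) (pmf (map_pmf (\<lambda>\<omega>. (U \<omega>, W \<omega>)) P))
        (pmf (map_pmf (\<lambda>\<omega>. (V \<omega>, W \<omega>)) P))"
      using sXW[OF U_vals] sXW[OF V_vals] mXW by (intro pairW) auto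
    also have "ov (\<U> \<times> \<W>) (pmf (map_pmf (\<lambda>\<omega>. (U \<omega>, W \<omega>)) P))
        (pmf (map_pmf (\<lambda>\<omega>. (V \<omega>, W \<omega>)) P)) = (\<Sum>w\<in>\<W>. q w * ov \<U> (pmf (Uw w)) (pmf (Vw w)))"
      using q0 by (intro ov_prod) (auto simp: condf Uw_def Vw_def)
    also have "c * (\<Sum>w\<in>\<W>. q w * ov \<U> (pmf (Uw w)) (pmf (Vw w))) =
        (\<Sum>w\<in>\<W>. wasserstein1 (lpdist p) (Uw w) (Vw w) * q w)"
      using sX[OF U_vals] sX[OF V_vals] by (simp add: single Uw_def Vw_def sum_distrib_left mult_ac)
    finally show ?thesis .
  qed
  have goal3: "wasserstein1 (pair_lpdist p) (pair_pmf (map_pmf U P) (map_pmf W P))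
        (pair_pmf (map_pmf V P) (map_pmf W P))
     = (\<Sum>w\<in>\<W>. wasserstein1 (lpdist p) (map_pmf U P) (map_pmf V P) * q w)"
  proof -
    have "wasserstein1 (pair_lpdist p) (pair_pmf (map_pmf U P) (map_pmf W P))
        (pair_pmf (map_pmf V P) (map_pmf W P)) = c * ov (\<U> \<times> \<W>) (pmf (pair_pmf (map_pmf U P) (map_pmf W P)))
        (pmf (pair_pmf (map_pmf V P) (map_pmf W P)))"
      using sPair[OF U_vals] sPair[OF V_vals] mP by (intro pairW) auto
    also have "ov (\<U> \<times> \<W>) (pmf (pair_pmf (map_pmf U P) (map_pmf W P)))
        (pmf (pair_pmf (map_pmf V P) (map_pmf W P))) = (\<Sum>w\<in>\<W>. q w * ov \<U> (pmf (map_pmf U P)) (pmf (map_pmf V P)))"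
      using q0 by (intro ov_prod) (auto simp: pP)
    also have "c * (\<Sum>w\<in>\<W>. q w * ov \<U> (pmf (map_pmf U P)) (pmf (map_pmf V P))) =
        (\<Sum>w\<in>\<W>. wasserstein1 (lpdist p) (map_pmf U P) (map_pmf V P) * q w)"
      using sX[OF U_vals] sX[OF V_vals] by (simp add: single sum_distrib_left mult_ac)
    finally show ?thesis .
  qed
  show ?thesis using goal1 goal2 goal3 by (simp add: Uw_def Vw_def q_def)
qed

end
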